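(* Let $\lambda\in(0,1]$, $S^{\min}\le S^{\max}$, $U^{\min}\le 0\le U^{\max}$ and real numbers $\underline{D}g<\overline{D}g$ be given, with $W^{\max},\Gamma^{\min}(W),\Gamma^{\max}(W)$, $M(\Gamma)$ as in the context. Consider the parameter optimization problem \[ \textbf{(PO)}\quad \text{minimize } M(\Gamma)/W \quad\text{subject to } \Gamma^{\min}(W)\le\Gamma\le\Gamma^{\max}(W),\ 0<W\le W^{\max}, \] over $(\Gamma,W)$, and the semidefinite program \[ \text{minimize } N^{u}+\lambda(1-\lambda)N^{s} \] over $(\Gamma,W,N^u,N^s)$ subject to $\Gamma^{\min}(W)\le\Gamma\le\Gamma^{\max}(W)$, $0<W\le W^{\max}$, and \[ \begin{bmatrix} N^u & U^{\min}+(1-\lambda)\Gamma\\ U^{\min}+(1-\lambda)\Gamma & 2W\end{bmatrix}\succeq0,\quad \begin{bmatrix} N^u & U^{\max}+(1-\lambda)\Gamma\\ U^{\max}+(1-\lambda)\Gamma & 2W\end{bmatrix}\succeq0, \] \[ \begin{bmatrix} N^s & S^{\min}+\Gamma\\ S^{\min}+\Gamma & W\end{bmatrix}\succeq0,\quad \begin{bmatrix} N^s & S^{\max}+\Gamma\\ S^{\max}+\Gamma & W\end{bmatrix}\succeq0. \] Then \textbf{(PO)} can be solved via this semidefinite program: the two problems have the same optimal value, and $(\Gamma,W)$ is optimal for \textbf{(PO)} if and only if there exist $N^u,N^s$ such that $(\Gamma,W,N^u,N^s)$ is optimal for the semidefinite program.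
   Context: Definitions: $W^{\max}=\dfrac{(S^{\max}-S^{\min})-(U^{\max}-U^{\min})}{\overline{D}g-\underline{D}g}$; $\Gamma^{\min}(W)=\frac1\lambda\big(-W\underline{D}g+U^{\max}-S^{\max}\big)$ and $\Gamma^{\max}(W)=\frac1\lambda\big(-W\overline{D}g-S^{\min}+U^{\min}\big)$ (affine in $W$); $M(\Gamma)=M^u(\Gamma)+\lambda(1-\lambda)M^s(\Gamma)$ with $M^{u}(\Gamma)=\tfrac12\max\big((U^{\min}+(1-\lambda)\Gamma)^2,(U^{\max}+(1-\lambda)\Gamma)^2\big)$ and $M^{s}(\Gamma)=\max\big((S^{\min}+\Gamma)^2,(S^{\max}+\Gamma)^2\big)$. In the paper, $M(\Gamma)/W$ is the sub-optimality bound of an online storage control algorithm with shift parameter $\Gamma$ and weight parameter $W$. *)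

theory Defs
  imports "HOL-Analysis.Analysis"
begin

definition psd :: "real^'n^'n \<Rightarrow> bool" where
  "psd A \<longleftrightarrow> transpose A = A \<and> (\<forall>x::real^'n. 0 \<le> x \<bullet> (A *v x))"

definition mat2 :: "real \<Rightarrow> real \<Rightarrow> real \<Rightarrow> real \<Rightarrow> real^2^2" where
  "mat2 a b c d = vector [vector [a, b], vector [c, d]]"

definition Wmax :: "real \<Rightarrow> real \<Rightarrow> real \<Rightarrow> real \<Rightarrow> real \<Rightarrow> real \<Rightarrow> real" where
  "Wmax Smin Smax Umin Umax Dl Du = ((Smax - Smin) - (Umax - Umin)) / (Du - Dl)"

definition Gmin :: "real \<Rightarrow> real \<Rightarrow> real \<Rightarrow> real \<Rightarrow> real \<Rightarrow> real" where
  "Gmin lam Smax Umax Dl W = (1 / lam) * (- W * Dl + Umax - Smax)"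

definition Gmax :: "real \<Rightarrow> real \<Rightarrow> real \<Rightarrow> real \<Rightarrow> real \<Rightarrow> real" where
  "Gmax lam Smin Umin Du W = (1 / lam) * (- W * Du - Smin + Umin)"

definition Mu :: "real \<Rightarrow> real \<Rightarrow> real \<Rightarrow> real \<Rightarrow> real" where
  "Mu lam Umin Umax G = (1/2) * max ((Umin + (1 - lam) * G)^2) ((Umax + (1 - lam) * G)^2)"

definition Ms :: "real \<Rightarrow> real \<Rightarrow> real \<Rightarrow> real" where
  "Ms Smin Smax G = max ((Smin + G)^2) ((Smax + G)^2)"

definition Mfun :: "real \<Rightarrow> real \<Rightarrow> real \<Rightarrow> real \<Rightarrow> real \<Rightarrow> real \<Rightarrow> real" where
  "Mfun lam Smin Smax Umin Umax G = Mu lam Umin Umax G + lam * (1 - lam) * Ms Smin Smax G"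

definition PO_feas :: "real \<Rightarrow> real \<Rightarrow> real \<Rightarrow> real \<Rightarrow> real \<Rightarrow> real \<Rightarrow> real \<Rightarrow> (real \<times> real) set" where
  "PO_feas lam Smin Smax Umin Umax Dl Du =
     {(G, W). Gmin lam Smax Umax Dl W \<le> G \<and> G \<le> Gmax lam Smin Umin Du W
              \<and> 0 < W \<and> W \<le> Wmax Smin Smax Umin Umax Dl Du}"

definition PO_obj :: "real \<Rightarrow> real \<Rightarrow> real \<Rightarrow> real \<Rightarrow> real \<Rightarrow> real \<times> real \<Rightarrow> real" where
  "PO_obj lam Smin Smax Umin Umax p = Mfun lam Smin Smax Umin Umax (fst p) / snd p"

definition SDP_feas :: "real \<Rightarrow> real \<Rightarrow> real \<Rightarrow> real \<Rightarrow> real \<Rightarrow> real \<Rightarrow> real \<Rightarrow> (real \<times> real \<times> real \<times> real) set" where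
  "SDP_feas lam Smin Smax Umin Umax Dl Du =
     {(G, W, Nu, Ns). Gmin lam Smax Umax Dl W \<le> G \<and> G \<le> Gmax lam Smin Umin Du W
        \<and> 0 < W \<and> W \<le> Wmax Smin Smax Umin Umax Dl Du
        \<and> psd (mat2 Nu (Umin + (1 - lam) * G) (Umin + (1 - lam) * G) (2 * W))
        \<and> psd (mat2 Nu (Umax + (1 - lam) * G) (Umax + (1 - lam) * G) (2 * W))
        \<and> psd (mat2 Ns (Smin + G) (Smin + G) W)
        \<and> psd (mat2 Ns (Smax + G) (Smax + G) W)}"

definition SDP_obj :: "real \<Rightarrow> real \<times> real \<times> real \<times> real \<Rightarrow> real" where
  "SDP_obj lam q = (case q of (G, W, Nu, Ns) \<Rightarrow> Nu + lam * (1 - lam) * Ns)"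

definition is_opt :: "'a set \<Rightarrow> ('a \<Rightarrow> real) \<Rightarrow> 'a \<Rightarrow> bool" where
  "is_opt F f x \<longleftrightarrow> x \<in> F \<and> (\<forall>y\<in>F. f x \<le> f y)"

end

theory Submission
  imports Defs
begin

lemma qf: "x \<bullet> (mat2 N a b V *v x) = N*(x$1)^2 + (a+b)*(x$1)*(x$2) + V*(x$2)^2"
  by (simp add: mat2_def inner_vec_def matrix_vector_mult_def sum_2 power2_eq_square algebra_simps)
lemma tr: "transpose (mat2 N a a V) = mat2 N a a V"
  by (simp add: mat2_def transpose_def vec_eq_iff forall_2)
lemma psd2: assumes "V > 0" shows "psd (mat2 N a a V) \<longleftrightarrow> a^2 \<le> N*V"
proof
  assume "psd (mat2 N a a V)"
  then have "0 \<le> (vector [V, -a] :: real^2) \<bullet> (mat2 N a a V *v vector [V, -a])" unfolding psd_def by blast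
  then have "0 \<le> V * (N*V - a^2)" unfolding qf by (simp add: power2_eq_square algebra_simps)
  then show "a^2 \<le> N*V" using assms by (simp add: zero_le_mult_iff)
next
  assume h: "a^2 \<le> N*V"
  show "psd (mat2 N a a V)" unfolding psd_def tr
  proof (intro conjI allI refl)
    fix x :: "real^2"
    have "V * (N*(x$1)^2 + (a+a)*(x$1)*(x$2) + V*(x$2)^2) = (V*x$2 + a*x$1)^2 + (N*V - a^2)*(x$1)^2"
      by (simp add: power2_eq_square algebra_simps)
    also have "\<dots> \<ge> 0" using h by simp
    finally show "0 \<le> x \<bullet> (mat2 N a a V *v x)" unfolding qf using assms by (simp add: zero_le_mult_iff)
  qed
qed

lemma liftA:
  assumes l: "0 < lam" "lam \<le> 1" and q: "(G, W, Nu, Ns) \<in> SDP_feas lam Smin Smax Umin Umax Dl Du"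
  shows "(G, W) \<in> PO_feas lam Smin Smax Umin Umax Dl Du
         \<and> PO_obj lam Smin Smax Umin Umax (G, W) \<le> SDP_obj lam (G, W, Nu, Ns)"
proof -
  from q have W: "W > 0" and f: "Gmin lam Smax Umax Dl W \<le> G" "G \<le> Gmax lam Smin Umin Du W"
    "W \<le> Wmax Smin Smax Umin Umax Dl Du"
    and p1: "psd (mat2 Nu (Umin + (1 - lam) * G) (Umin + (1 - lam) * G) (2 * W))"
    and p2: "psd (mat2 Nu (Umax + (1 - lam) * G) (Umax + (1 - lam) * G) (2 * W))"
    and p3: "psd (mat2 Ns (Smin + G) (Smin + G) W)"
    and p4: "psd (mat2 Ns (Smax + G) (Smax + G) W)"
    unfolding SDP_feas_def by auto
  have W2: "2*W > 0" using W by simp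
  have "2 * Mu lam Umin Umax G \<le> Nu * (2*W)"
    using p1 p2 unfolding psd2[OF W2] Mu_def by simp
  then have u: "Mu lam Umin Umax G / W \<le> Nu" using W by (simp add: field_simps)
  have "Ms Smin Smax G \<le> Ns * W"
    using p3 p4 unfolding psd2[OF W] Ms_def by simp
  then have s: "Ms Smin Smax G / W \<le> Ns" using W by (simp add: field_simps)
  have ll: "0 \<le> lam * (1 - lam)" using l by simp
  have "PO_obj lam Smin Smax Umin Umax (G, W) = Mu lam Umin Umax G / W + lam * (1 - lam) * (Ms Smin Smax G / W)"
    unfolding PO_obj_def Mfun_def by (simp add: add_divide_distrib)
  also have "\<dots> \<le> Nu + lam * (1 - lam) * Ns"
    using u s ll by (intro add_mono mult_left_mono) auto
  finally show ?thesis using f W unfolding PO_feas_def SDP_obj_def by auto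
qed

lemma liftB:
  assumes l: "0 < lam" "lam \<le> 1" and p: "(G, W) \<in> PO_feas lam Smin Smax Umin Umax Dl Du"
  shows "(G, W, Mu lam Umin Umax G / W, Ms Smin Smax G / W) \<in> SDP_feas lam Smin Smax Umin Umax Dl Du
         \<and> SDP_obj lam (G, W, Mu lam Umin Umax G / W, Ms Smin Smax G / W) = PO_obj lam Smin Smax Umin Umax (G, W)"
proof -
  from p have W: "W > 0" and f: "Gmin lam Smax Umax Dl W \<le> G" "G \<le> Gmax lam Smin Umin Du W"
    "W \<le> Wmax Smin Smax Umin Umax Dl Du" unfolding PO_feas_def by auto
  have W2: "2*W > 0" using W by simp
  have e1: "Mu lam Umin Umax G / W * (2*W) = 2 * Mu lam Umin Umax G" using W by simp
  have e2: "Ms Smin Smax G / W * W = Ms Smin Smax G" using W by simp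
  show ?thesis unfolding SDP_feas_def SDP_obj_def PO_obj_def Mfun_def
    using f W psd2[OF W2] psd2[OF W] e1 e2
    by (auto simp: Mu_def Ms_def add_divide_distrib)
qed

theorem lemma1:
  fixes lam Smin Smax Umin Umax Dl Du :: real
  assumes "0 < lam" and "lam \<le> 1"
    and "Smin \<le> Smax" and "Umin \<le> 0" and "0 \<le> Umax"
    and "Dl < Du"
  shows "(INF p\<in>PO_feas lam Smin Smax Umin Umax Dl Du. ereal (PO_obj lam Smin Smax Umin Umax p))
           = (INF q\<in>SDP_feas lam Smin Smax Umin Umax Dl Du. ereal (SDP_obj lam q))
         \<and> (\<forall>G W. is_opt (PO_feas lam Smin Smax Umin Umax Dl Du) (PO_obj lam Smin Smax Umin Umax) (G, W)
              \<longleftrightarrow> (\<exists>Nu Ns. is_opt (SDP_feas lam Smin Smax Umin Umax Dl Du) (SDP_obj lam) (G, W, Nu, Ns)))"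
proof -
  let ?P = "PO_feas lam Smin Smax Umin Umax Dl Du" and ?S = "SDP_feas lam Smin Smax Umin Umax Dl Du"
  let ?f = "PO_obj lam Smin Smax Umin Umax" and ?g = "SDP_obj lam"
  let ?L = "\<lambda>(G::real, W::real). (G, W, Mu lam Umin Umax G / W, Ms Smin Smax G / W)"
  have A: "\<And>G W Nu Ns. (G, W, Nu, Ns) \<in> ?S \<Longrightarrow> (G, W) \<in> ?P \<and> ?f (G, W) \<le> ?g (G, W, Nu, Ns)"
    using liftA[OF assms(1,2)] by blast
  have B: "\<And>G W. (G, W) \<in> ?P \<Longrightarrow> ?L (G, W) \<in> ?S \<and> ?g (?L (G, W)) = ?f (G, W)"
    using liftB[OF assms(1,2)] by simp
  have i1: "(INF p\<in>?P. ereal (?f p)) \<le> (INF q\<in>?S. ereal (?g q))"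
  proof (rule INF_mono)
    fix q assume "q \<in> ?S"
    then obtain G W Nu Ns where "q = (G, W, Nu, Ns)" "(G, W, Nu, Ns) \<in> ?S" by (cases q) auto
    with A[of G W Nu Ns] show "\<exists>p\<in>?P. ereal (?f p) \<le> ereal (?g q)" by (intro bexI[of _ "(G, W)"]) auto
  qed
  have i2: "(INF q\<in>?S. ereal (?g q)) \<le> (INF p\<in>?P. ereal (?f p))"
  proof (rule INF_mono)
    fix p assume "p \<in> ?P"
    then obtain G W where "p = (G, W)" "(G, W) \<in> ?P" by (cases p) auto
    with B[of G W] show "\<exists>q\<in>?S. ereal (?g q) \<le> ereal (?f p)" by (intro bexI[of _ "?L (G, W)"]) auto
  qed
  have opt: "is_opt ?P ?f (G, W) \<longleftrightarrow> (\<exists>Nu Ns. is_opt ?S ?g (G, W, Nu, Ns))" for G W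
  proof
    assume h: "is_opt ?P ?f (G, W)"
    have "is_opt ?S ?g (?L (G, W))"
      unfolding is_opt_def
    proof
      show "?L (G, W) \<in> ?S" using B[of G W] h unfolding is_opt_def by blast
      show "\<forall>y\<in>?S. ?g (?L (G, W)) \<le> ?g y"
      proof
        fix y assume "y \<in> ?S"
        then obtain G' W' Nu Ns where y: "y = (G', W', Nu, Ns)" "(G', W', Nu, Ns) \<in> ?S" by (cases y) auto
        have "?g (?L (G, W)) = ?f (G, W)" using B[of G W] h unfolding is_opt_def by blast
        also have "\<dots> \<le> ?f (G', W')" using h A[OF y(2)] unfolding is_opt_def by blast
        also have "\<dots> \<le> ?g y" using A[OF y(2)] y(1) by simp
        finally show "?g (?L (G, W)) \<le> ?g y" .
      qed
    qed
    then show "\<exists>Nu Ns. is_opt ?S ?g (G, W, Nu, Ns)" by auto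
  next
    assume "\<exists>Nu Ns. is_opt ?S ?g (G, W, Nu, Ns)"
    then obtain Nu Ns where h: "is_opt ?S ?g (G, W, Nu, Ns)" by blast
    show "is_opt ?P ?f (G, W)"
      unfolding is_opt_def
    proof
      show "(G, W) \<in> ?P" using A[of G W Nu Ns] h unfolding is_opt_def by blast
      show "\<forall>y\<in>?P. ?f (G, W) \<le> ?f y"
      proof
        fix y assume "y \<in> ?P"
        then obtain G' W' where y: "y = (G', W')" "(G', W') \<in> ?P" by (cases y) auto
        have "?f (G, W) \<le> ?g (G, W, Nu, Ns)" using A[of G W Nu Ns] h unfolding is_opt_def by blast
        also have "\<dots> \<le> ?g (?L (G', W'))" using h B[OF y(2)] unfolding is_opt_def by blast
        also have "\<dots> = ?f y" using B[OF y(2)] y(1) by simp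
        finally show "?f (G, W) \<le> ?f y" .
      qed
    qed
  qed
  show ?thesis using i1 i2 opt by (simp add: antisym)
qed

end
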